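(* Let $(b,c)$ be a connected weighted graph over $X$ with $c\equiv0$. Then, pointwise on $X\times X$, $$\varrho=\sup\{\sigma:\ \sigma \text{ is a pseudometric on }X\text{ intrinsic with respect to some measure } m \text{ on } X \text{ with } m(X)\le1\}.$$
   Context: Let $X$ be a countably infinite set. A weighted graph $(b,c)$ over $X$ consists of a symmetric $b:X\times X\to[0,\infty)$ with $b(x,x)=0$ and $\sum_{y}b(x,y)<\infty$ for all $x$, and $c:X\to[0,\infty)$. A path is a finite sequence of pairwise distinct vertices with $b(x_{i-1},x_i)>0$ for consecutive vertices; the graph is connected if any two distinct vertices are joined by a path. For $f:X\to\mathbb C$ let $\widetilde Q(f)=\frac12\sum_{x,y}b(x,y)|f(x)-f(y)|^2+\sum_x c(x)|f(x)|^2\in[0,\infty]$, $\widetilde D=\{f:\widetilde Q(f)<\infty\}$, and $\varrho(x,y)=\sup\{|f(x)-f(y)|:f\in\widetilde D,\ \widetilde Q(f)\le1\}$. A measure on $X$ is a function $m:X\to[0,\infty)$ with $m(A)=\sum_{x\in A}m(x)$. A pseudometric $\sigma$ on $X$ is intrinsic with respect to $m$ if $\frac12\sum_{y}b(x,y)\sigma(x,y)^2\le m(x)$ for all $x\in X$. *)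

theory Defs
  imports "HOL-Analysis.Analysis"
begin

definition weighted_graph :: "('a \<Rightarrow> 'a \<Rightarrow> real) \<Rightarrow> ('a \<Rightarrow> real) \<Rightarrow> bool" where
  "weighted_graph b c \<longleftrightarrow>
     (\<forall>x y. b x y = b y x) \<and> (\<forall>x y. 0 \<le> b x y) \<and> (\<forall>x. b x x = 0) \<and>
     (\<forall>x. (\<lambda>y. b x y) summable_on UNIV) \<and> (\<forall>x. 0 \<le> c x)"

definition is_path :: "('a \<Rightarrow> 'a \<Rightarrow> real) \<Rightarrow> 'a list \<Rightarrow> bool" where
  "is_path b p \<longleftrightarrow> p \<noteq> [] \<and> distinct p \<and>
     (\<forall>i. Suc i < length p \<longrightarrow> b (p ! i) (p ! Suc i) > 0)"

definition connected_graph :: "('a \<Rightarrow> 'a \<Rightarrow> real) \<Rightarrow> bool" where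
  "connected_graph b \<longleftrightarrow>
     (\<forall>x y. x \<noteq> y \<longrightarrow> (\<exists>p. is_path b p \<and> hd p = x \<and> last p = y))"

definition Qt :: "('a \<Rightarrow> 'a \<Rightarrow> real) \<Rightarrow> ('a \<Rightarrow> real) \<Rightarrow> ('a \<Rightarrow> complex) \<Rightarrow> ennreal" where
  "Qt b c f = (\<Sum>\<^sub>\<infinity>(x,y)\<in>UNIV. ennreal (b x y * (cmod (f x - f y))\<^sup>2)) / 2
              + (\<Sum>\<^sub>\<infinity>x\<in>UNIV. ennreal (c x * (cmod (f x))\<^sup>2))"

definition Dt :: "('a \<Rightarrow> 'a \<Rightarrow> real) \<Rightarrow> ('a \<Rightarrow> real) \<Rightarrow> ('a \<Rightarrow> complex) set" where
  "Dt b c = {f. Qt b c f < \<infinity>}"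

definition rho :: "('a \<Rightarrow> 'a \<Rightarrow> real) \<Rightarrow> ('a \<Rightarrow> real) \<Rightarrow> 'a \<Rightarrow> 'a \<Rightarrow> ereal" where
  "rho b c x y = Sup {ereal (cmod (f x - f y)) | f. f \<in> Dt b c \<and> Qt b c f \<le> 1}"

definition pseudometric :: "('a \<Rightarrow> 'a \<Rightarrow> real) \<Rightarrow> bool" where
  "pseudometric \<sigma> \<longleftrightarrow> (\<forall>x y. 0 \<le> \<sigma> x y) \<and> (\<forall>x. \<sigma> x x = 0) \<and>
     (\<forall>x y. \<sigma> x y = \<sigma> y x) \<and> (\<forall>x y z. \<sigma> x z \<le> \<sigma> x y + \<sigma> y z)"

definition is_measure_fn :: "('a \<Rightarrow> real) \<Rightarrow> bool" where
  "is_measure_fn m \<longleftrightarrow> (\<forall>x. 0 \<le> m x)"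

definition total_mass :: "('a \<Rightarrow> real) \<Rightarrow> ennreal" where
  "total_mass m = (\<Sum>\<^sub>\<infinity>x\<in>UNIV. ennreal (m x))"

definition intrinsic :: "('a \<Rightarrow> 'a \<Rightarrow> real) \<Rightarrow> ('a \<Rightarrow> 'a \<Rightarrow> real) \<Rightarrow> ('a \<Rightarrow> real) \<Rightarrow> bool" where
  "intrinsic b \<sigma> m \<longleftrightarrow>
     (\<forall>x. (\<Sum>\<^sub>\<infinity>y\<in>UNIV. ennreal (b x y * (\<sigma> x y)\<^sup>2)) / 2 \<le> ennreal (m x))"

end

theory Submission
  imports Defs
begin

lemma fin_le_infsum: "finite F \<Longrightarrow> F \<subseteq> A \<Longrightarrow> sum (g::_\<Rightarrow>ennreal) F \<le> infsum g A"
  using infsum_mono_neutral[of g F g A] by (auto simp: nonneg_summable_on_complete)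

lemma ennreal_infsum_Sigma:
  "(\<Sum>\<^sub>\<infinity>(x,y)\<in>UNIV. (f x y::ennreal)) = (\<Sum>\<^sub>\<infinity>x\<in>UNIV. \<Sum>\<^sub>\<infinity>y\<in>UNIV. f x y)"
proof (rule antisym)
  let ?p = "\<lambda>(x,y). f x y"
  show "(\<Sum>\<^sub>\<infinity>(x,y)\<in>UNIV. f x y) \<le> (\<Sum>\<^sub>\<infinity>x\<in>UNIV. \<Sum>\<^sub>\<infinity>y\<in>UNIV. f x y)"
  proof (rule infsum_le_finite_sums)
    show "?p summable_on UNIV" by (simp add: nonneg_summable_on_complete)
    fix F :: "('a \<times> 'b) set" assume F: "finite F" "F \<subseteq> UNIV"
    have "sum ?p F \<le> sum ?p (fst ` F \<times> snd ` F)"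
      by (rule sum_mono2) (use F in force)+
    also have "\<dots> = (\<Sum>x\<in>fst ` F. \<Sum>y\<in>snd ` F. f x y)"
      by (simp add: sum.cartesian_product)
    also have "\<dots> \<le> (\<Sum>x\<in>fst ` F. \<Sum>\<^sub>\<infinity>y\<in>UNIV. f x y)"
      by (intro sum_mono fin_le_infsum) (use F in auto)
    also have "\<dots> \<le> (\<Sum>\<^sub>\<infinity>x\<in>UNIV. \<Sum>\<^sub>\<infinity>y\<in>UNIV. f x y)"
      by (intro fin_le_infsum) (use F in auto)
    finally show "sum ?p F \<le> (\<Sum>\<^sub>\<infinity>x\<in>UNIV. \<Sum>\<^sub>\<infinity>y\<in>UNIV. f x y)" .
  qed
  show "(\<Sum>\<^sub>\<infinity>x\<in>UNIV. \<Sum>\<^sub>\<infinity>y\<in>UNIV. f x y) \<le> (\<Sum>\<^sub>\<infinity>(x,y)\<in>UNIV. f x y)"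
  proof (rule infsum_le_finite_sums)
    show "(\<lambda>x. \<Sum>\<^sub>\<infinity>y\<in>UNIV. f x y) summable_on UNIV" by (simp add: nonneg_summable_on_complete)
    fix X :: "'a set" assume X: "finite X" "X \<subseteq> UNIV"
    have row: "(\<Sum>\<^sub>\<infinity>y\<in>UNIV. f x y) = infsum ?p (Pair x ` UNIV)" for x
      by (subst infsum_reindex) (auto simp: inj_on_def o_def)
    have "(\<Sum>x\<in>X. \<Sum>\<^sub>\<infinity>y\<in>UNIV. f x y) = (\<Sum>x\<in>X. infsum ?p (Pair x ` UNIV))"
      by (simp add: row)
    also have "\<dots> = infsum ?p (\<Union>x\<in>X. Pair x ` UNIV)"
      by (rule sum_infsum) (use X in \<open>auto simp: nonneg_summable_on_complete\<close>)
    also have "\<dots> \<le> infsum ?p UNIV"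
      by (rule infsum_mono_neutral) (auto simp: nonneg_summable_on_complete)
    finally show "(\<Sum>x\<in>X. \<Sum>\<^sub>\<infinity>y\<in>UNIV. f x y) \<le> (\<Sum>\<^sub>\<infinity>(x,y)\<in>UNIV. f x y)" by simp
  qed
qed

lemma h2: "(y + y) / 2 = (y::ennreal)"
proof -
  have "y + y = y * 2" by (simp add: mult_2_right)
  thus ?thesis by (simp add: mult_divide_eq_ennreal)
qed

lemma h: "(x::ennreal) / 2 + x / 2 = x"
  by (metis add_divide_distrib_ennreal h2)

lemma ennreal_infsum_div2:
  "(\<Sum>\<^sub>\<infinity>x\<in>A. (f x::ennreal) / 2) = (\<Sum>\<^sub>\<infinity>x\<in>A. f x) / 2"
proof -
  have "(\<Sum>\<^sub>\<infinity>x\<in>A. f x) = (\<Sum>\<^sub>\<infinity>x\<in>A. f x / 2 + f x / 2)"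
    by (simp add: h)
  also have "\<dots> = (\<Sum>\<^sub>\<infinity>x\<in>A. f x / 2) + (\<Sum>\<^sub>\<infinity>x\<in>A. f x / 2)"
    by (rule infsum_add) (simp_all add: nonneg_summable_on_complete)
  finally show ?thesis by (simp add: h2)
qed

lemma ennreal_single_le_infsum:
  "(f u :: ennreal) \<le> (\<Sum>\<^sub>\<infinity>x\<in>UNIV. f x)"
proof -
  have "(\<Sum>\<^sub>\<infinity>x\<in>{u}. f x) \<le> (\<Sum>\<^sub>\<infinity>x\<in>UNIV. f x)"
    by (rule infsum_mono_neutral) (auto simp: nonneg_summable_on_complete)
  thus ?thesis by simp
qed

theorem mainTheorem4:
  fixes b :: "'a \<Rightarrow> 'a \<Rightarrow> real" and c :: "'a \<Rightarrow> real"
  assumes "countable (UNIV :: 'a set)" and "infinite (UNIV :: 'a set)"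
    and "weighted_graph b c" and "connected_graph b" and "\<forall>x. c x = 0"
  shows "\<forall>x y. rho b c x y =
           Sup {ereal (\<sigma> x y) | \<sigma>. pseudometric \<sigma> \<and>
                 (\<exists>m. is_measure_fn m \<and> total_mass m \<le> 1 \<and> intrinsic b \<sigma> m)}"
proof (intro allI)
  fix x y
  have bnn: "\<And>u v. 0 \<le> b u v" using assms(3) unfolding weighted_graph_def by auto
  have Qt0: "\<And>f. Qt b c f = (\<Sum>\<^sub>\<infinity>(u,v)\<in>UNIV. ennreal (b u v * (cmod (f u - f v))\<^sup>2)) / 2"
    unfolding Qt_def using assms(5) by simp
  let ?A = "{ereal (cmod (f x - f y)) | f. f \<in> Dt b c \<and> Qt b c f \<le> 1}"
  let ?B = "{ereal (\<sigma> x y) | \<sigma>. pseudometric \<sigma> \<and>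
                 (\<exists>m. is_measure_fn m \<and> total_mass m \<le> 1 \<and> intrinsic b \<sigma> m)}"
  have AB: "?A \<subseteq> ?B"
  proof
    fix z assume "z \<in> ?A"
    then obtain f where z: "z = ereal (cmod (f x - f y))" and fQ: "Qt b c f \<le> 1" by auto
    define \<sigma> where "\<sigma> u v = cmod (f u - f v)" for u v
    define S where "S u = (\<Sum>\<^sub>\<infinity>v\<in>UNIV. ennreal (b u v * (\<sigma> u v)\<^sup>2))" for u
    define m where "m u = enn2real (S u) / 2" for u
    have tot: "(\<Sum>\<^sub>\<infinity>u\<in>UNIV. S u) / 2 \<le> 1"
      using fQ unfolding Qt0 S_def \<sigma>_def ennreal_infsum_Sigma by simp
    have Sfin: "S u < \<infinity>" for u
    proof -
      have "S u / 2 \<le> (\<Sum>\<^sub>\<infinity>u\<in>UNIV. S u) / 2"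
        by (intro divide_right_mono_ennreal ennreal_single_le_infsum)
      also have "\<dots> \<le> 1" by (fact tot)
      finally have "S u / 2 < \<infinity>" by (simp add: order_le_less_trans)
      thus ?thesis
        using ennreal_divide_eq_top_iff[of "S u" 2] by (auto simp: top.not_eq_extremum)
    qed
    have mS: "ennreal (m u) = S u / 2" for u
    proof -
      have "ennreal (m u) = ennreal (enn2real (S u)) / ennreal 2"
        unfolding m_def by (simp add: ennreal_divide_numeral)
      also have "\<dots> = S u / 2" using Sfin[of u] by simp
      finally show ?thesis .
    qed
    have "pseudometric \<sigma>"
      unfolding pseudometric_def \<sigma>_def
      by (auto simp: norm_minus_commute intro: norm_diff_triangle_le)
    moreover have "is_measure_fn m" unfolding is_measure_fn_def m_def by simp
    moreover have "total_mass m \<le> 1"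
      unfolding total_mass_def mS ennreal_infsum_div2 by (fact tot)
    moreover have "intrinsic b \<sigma> m"
      unfolding intrinsic_def mS S_def by simp
    ultimately have P: "pseudometric \<sigma> \<and> (\<exists>m. is_measure_fn m \<and> total_mass m \<le> 1 \<and> intrinsic b \<sigma> m)"
      by blast
    have "z = ereal (\<sigma> x y)" unfolding z \<sigma>_def ..
    thus "z \<in> ?B" using P by blast
  qed
  have BA: "?B \<subseteq> ?A"
  proof
    fix z assume "z \<in> ?B"
    then obtain \<sigma> m where z: "z = ereal (\<sigma> x y)" and ps: "pseudometric \<sigma>"
      and mm: "total_mass m \<le> 1" and intr: "intrinsic b \<sigma> m" by auto
    define f where "f u = complex_of_real (\<sigma> x u)" for u
    have le: "cmod (f u - f v) \<le> \<sigma> u v" for u v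
    proof -
      have "\<sigma> x u \<le> \<sigma> x v + \<sigma> v u" "\<sigma> x v \<le> \<sigma> x u + \<sigma> u v" "\<sigma> v u = \<sigma> u v"
        using ps unfolding pseudometric_def by blast+
      thus ?thesis unfolding f_def by (simp add: abs_le_iff norm_of_real[symmetric] of_real_diff[symmetric] del: of_real_diff)
    qed
    have "Qt b c f \<le> (\<Sum>\<^sub>\<infinity>(u,v)\<in>UNIV. ennreal (b u v * (\<sigma> u v)\<^sup>2)) / 2"
      unfolding Qt0
    proof (intro divide_right_mono_ennreal infsum_mono)
      fix p :: "'a \<times> 'a" assume "p \<in> UNIV"
      obtain u v where p: "p = (u,v)" by fastforce
      have "(cmod (f u - f v))\<^sup>2 \<le> (\<sigma> u v)\<^sup>2"
        using le[of u v] by (intro power_mono) auto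
      hence "b u v * (cmod (f u - f v))\<^sup>2 \<le> b u v * (\<sigma> u v)\<^sup>2"
        using bnn[of u v] by (rule mult_left_mono)
      thus "(case p of (u, v) \<Rightarrow> ennreal (b u v * (cmod (f u - f v))\<^sup>2))
            \<le> (case p of (u, v) \<Rightarrow> ennreal (b u v * (\<sigma> u v)\<^sup>2))"
        unfolding p by (simp add: ennreal_leI)
    qed (auto simp: nonneg_summable_on_complete)
    also have "\<dots> = (\<Sum>\<^sub>\<infinity>u\<in>UNIV. (\<Sum>\<^sub>\<infinity>v\<in>UNIV. ennreal (b u v * (\<sigma> u v)\<^sup>2)) / 2)"
      unfolding ennreal_infsum_Sigma ennreal_infsum_div2 ..
    also have "\<dots> \<le> (\<Sum>\<^sub>\<infinity>u\<in>UNIV. ennreal (m u))"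
      using intr unfolding intrinsic_def by (intro infsum_mono) (auto simp: nonneg_summable_on_complete)
    also have "\<dots> \<le> 1" using mm unfolding total_mass_def .
    finally have fQ: "Qt b c f \<le> 1" .
    hence "f \<in> Dt b c" unfolding Dt_def using order_le_less_trans by fastforce
    moreover have "cmod (f x - f y) = \<sigma> x y"
    proof -
      have "\<sigma> x x = 0" "\<sigma> x y \<ge> 0" using ps unfolding pseudometric_def by auto
      thus ?thesis unfolding f_def by (simp flip: of_real_diff)
    qed
    ultimately show "z \<in> ?A" using fQ unfolding z by (metis (mono_tags, lifting) mem_Collect_eq)
  qed
  have "?A = ?B" using AB BA by blast
  thus "rho b c x y = Sup ?B" unfolding rho_def by simp
qed

end
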